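(* Let $(L,T,U,\bar e)$ be a feasible basis structure of an instance of the budget-constrained minimum cost flow problem and let $x$ be its basic feasible flow (the basic solution with respect to the budget $B$). Then $x$ can be decomposed as $x = x^I + x^C$, where $x^I\in\mathbb{Z}^E$ is integral and $x^C$ is non-zero (and possibly fractional) only on the edges of the cycle $C(\bar e)$.
   Context: Budget-constrained minimum cost flow problem: given a directed multigraph $G=(V,E)$ with capacities $u_e\in\mathbb{N}_{\ge 0}$, costs $c_e\in\mathbb{Z}$, usage fees $b_e\in\mathbb{N}_{\ge 0}$ for $e\in E$, and a budget $B\in\mathbb{N}_{\ge0}$. A feasible flow is a vector $x\in\mathbb{R}^E$ with $\sum_{e\in\delta^-(v)}x_e=\sum_{e\in\delta^+(v)}x_e$ for all $v\in V$ ($\delta^+(v)$, $\delta^-(v)$ the outgoing/incoming edges) and $0\le x_e\le u_e$; write $c(x)=\sum_e c_ex_e$, $b(x)=\sum_e b_ex_e$. The goal is to minimize $c(x)$ over feasible flows with $b(x)\le B$. A basis structure is a tuple $(L,T,U,\bar e)$ with $\bar e\in E$, $L,T,U$ a partition of $E\setminus\{\bar e\}$, and $T$ a spanning tree of the underlying undirected graph of $G$. For $f\in E\setminus T$, $C(f)$ is the unique (undirected) cycle in $T\cup\{f\}$; $C^+(f)$ ($C^-(f)$) are its edges oriented in the same (opposite) direction as $f$ along the cycle, and $b(C(f))=\sum_{g\in C^+(f)}b_g-\sum_{g\in C^-(f)}b_g$. It is required that $b(C(\bar e))\neq 0$. The basic solution of $(L,T,U,\bar e)$ is the unique vector $x$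 satisfying flow conservation at every node, $x_e=0$ for $e\in L$, $x_e=u_e$ for $e\in U$, and $b(x)=B$. The basis structure is feasible if this $x$ satisfies $0\le x\le u$; $x$ is then called its basic feasible flow. *)

theory Defs
  imports Complex_Main
begin

definition wf_digraph :: "'v set \<Rightarrow> 'e set \<Rightarrow> ('e \<Rightarrow> 'v) \<Rightarrow> ('e \<Rightarrow> 'v) \<Rightarrow> bool" where
  "wf_digraph V E tail head \<longleftrightarrow> finite V \<and> finite E \<and> (\<forall>e\<in>E. tail e \<in> V \<and> head e \<in> V)"

definition und_adj :: "'e set \<Rightarrow> ('e \<Rightarrow> 'v) \<Rightarrow> ('e \<Rightarrow> 'v) \<Rightarrow> ('v \<times> 'v) set" where
  "und_adj F tail head = {(tail e, head e) | e. e \<in> F} \<union> {(head e, tail e) | e. e \<in> F}"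

definition und_connected :: "'e set \<Rightarrow> ('e \<Rightarrow> 'v) \<Rightarrow> ('e \<Rightarrow> 'v) \<Rightarrow> 'v \<Rightarrow> 'v \<Rightarrow> bool" where
  "und_connected F tail head v w \<longleftrightarrow> (v, w) \<in> (und_adj F tail head)\<^sup>*"

text \<open>T is a spanning tree of the underlying undirected (multi)graph of (V,E):
  T is a set of edges, any two vertices are connected using T, and T is
  acyclic, i.e. every edge of T is a bridge of T (its endpoints are disconnected
  after removing it; in particular T contains no loops and no parallel edges).\<close>
definition spanning_tree :: "'v set \<Rightarrow> 'e set \<Rightarrow> ('e \<Rightarrow> 'v) \<Rightarrow> ('e \<Rightarrow> 'v) \<Rightarrow> 'e set \<Rightarrow> bool" where
  "spanning_tree V E tail head T \<longleftrightarrow>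
     T \<subseteq> E \<and>
     (\<forall>v\<in>V. \<forall>w\<in>V. und_connected T tail head v w) \<and>
     (\<forall>e\<in>T. \<not> und_connected (T - {e}) tail head (tail e) (head e))"

definition conserves :: "'v set \<Rightarrow> 'e set \<Rightarrow> ('e \<Rightarrow> 'v) \<Rightarrow> ('e \<Rightarrow> 'v) \<Rightarrow> ('e \<Rightarrow> 'a::comm_monoid_add) \<Rightarrow> bool" where
  "conserves V E tail head x \<longleftrightarrow>
     (\<forall>v\<in>V. (\<Sum>e\<in>{e\<in>E. head e = v}. x e) = (\<Sum>e\<in>{e\<in>E. tail e = v}. x e))"

text \<open>The fundamental cycle C(f) of f w.r.t. the tree T, encoded as its signed
  incidence vector: +1 on the edges of C^+(f) (oriented like f along the cycle,
  including f itself), -1 on the edges of C^-(f), 0 elsewhere.\<close>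
definition fund_cycle :: "'v set \<Rightarrow> 'e set \<Rightarrow> ('e \<Rightarrow> 'v) \<Rightarrow> ('e \<Rightarrow> 'v) \<Rightarrow> 'e set \<Rightarrow> 'e \<Rightarrow> ('e \<Rightarrow> int)" where
  "fund_cycle V E tail head T f = (THE \<gamma>.
     \<gamma> f = 1 \<and> (\<forall>e. \<gamma> e \<in> {-1, 0, 1}) \<and> (\<forall>e. \<gamma> e \<noteq> 0 \<longrightarrow> e \<in> insert f T) \<and>
     conserves V E tail head \<gamma>)"

definition cycle_edges :: "'v set \<Rightarrow> 'e set \<Rightarrow> ('e \<Rightarrow> 'v) \<Rightarrow> ('e \<Rightarrow> 'v) \<Rightarrow> 'e set \<Rightarrow> 'e \<Rightarrow> 'e set" where
  "cycle_edges V E tail head T f = {e. fund_cycle V E tail head T f e \<noteq> 0}"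

definition cycle_fee :: "'v set \<Rightarrow> 'e set \<Rightarrow> ('e \<Rightarrow> 'v) \<Rightarrow> ('e \<Rightarrow> 'v) \<Rightarrow> 'e set \<Rightarrow> ('e \<Rightarrow> nat) \<Rightarrow> 'e \<Rightarrow> int" where
  "cycle_fee V E tail head T b f = (\<Sum>e\<in>E. int (b e) * fund_cycle V E tail head T f e)"

definition basis_structure ::
  "'v set \<Rightarrow> 'e set \<Rightarrow> ('e \<Rightarrow> 'v) \<Rightarrow> ('e \<Rightarrow> 'v) \<Rightarrow> ('e \<Rightarrow> nat) \<Rightarrow>
   'e set \<Rightarrow> 'e set \<Rightarrow> 'e set \<Rightarrow> 'e \<Rightarrow> bool" where
  "basis_structure V E tail head b L T U eb \<longleftrightarrow>
     eb \<in> E \<and> L \<union> T \<union> U = E - {eb} \<and> L \<inter> T = {} \<and> L \<inter> U = {} \<and> T \<inter> U = {} \<and>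
     spanning_tree V E tail head T \<and> cycle_fee V E tail head T b eb \<noteq> 0"

definition basic_solution ::
  "'v set \<Rightarrow> 'e set \<Rightarrow> ('e \<Rightarrow> 'v) \<Rightarrow> ('e \<Rightarrow> 'v) \<Rightarrow> ('e \<Rightarrow> nat) \<Rightarrow> ('e \<Rightarrow> nat) \<Rightarrow> nat \<Rightarrow>
   'e set \<Rightarrow> 'e set \<Rightarrow> 'e set \<Rightarrow> ('e \<Rightarrow> real) \<Rightarrow> bool" where
  "basic_solution V E tail head u b B L T U x \<longleftrightarrow>
     conserves V E tail head x \<and> (\<forall>e\<in>L. x e = 0) \<and> (\<forall>e\<in>U. x e = real (u e)) \<and>
     (\<Sum>e\<in>E. real (b e) * x e) = real B"

end

theory Submission
  imports Defs
begin


definition divg :: "'e set \<Rightarrow> ('e \<Rightarrow> 'v) \<Rightarrow> ('e \<Rightarrow> 'v) \<Rightarrow> ('e \<Rightarrow> 'a::ab_group_add) \<Rightarrow> 'v \<Rightarrow> 'a" where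
  "divg F tail head y v = (\<Sum>e\<in>{e\<in>F. head e = v}. y e) - (\<Sum>e\<in>{e\<in>F. tail e = v}. y e)"

lemma divg_alt:
  assumes "finite F"
  shows "divg F tail head y v = (\<Sum>e\<in>F. (if head e = v then y e else 0) - (if tail e = v then y e else 0))"
  using assms by (simp add: divg_def sum_subtractf sum.inter_filter)

lemma divg_insert:
  assumes "finite F" "e \<notin> F"
  shows "divg (insert e F) tail head y v = divg F tail head y v + (if head e = v then y e else 0) - (if tail e = v then y e else 0)"
  using assms by (simp add: divg_alt algebra_simps)

lemma divg_of_int:
  "divg F tail head (\<lambda>e. of_int (g e)) v = (of_int (divg F tail head g v) :: real)"
  by (simp add: divg_def)

lemma conserves_divg:
  "conserves V E tail head y \<longleftrightarrow> (\<forall>v\<in>V. divg E tail head y v = 0)"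
  by (simp add: conserves_def divg_def)

lemma divg_support:
  assumes "finite E" "F \<subseteq> E" "\<forall>e\<in>E - F. y e = 0"
  shows "divg E tail head y v = divg F tail head y v"
proof -
  have "finite F" using assms finite_subset by blast
  then show ?thesis using assms
    by (simp add: divg_alt, intro sum.mono_neutral_right) auto
qed

lemma divg_split:
  assumes "finite E" "F \<subseteq> E"
  shows "divg E tail head y v = divg F tail head y v + divg (E - F) tail head y v"
  using assms sum.subset_diff[OF assms(2) assms(1)]
  by (simp add: divg_alt finite_subset add.commute)

lemma divg_lin:
  "divg F tail head (\<lambda>e. a e - (c::real) * b e) v = divg F tail head a v - c * divg F tail head b v"
  by (simp add: divg_def sum_subtractf sum_distrib_left algebra_simps)

lemma cut_zero:
  assumes "finite F" "finite S" "\<forall>e\<in>F. (tail e \<in> S \<longleftrightarrow> head e \<in> S)"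
  shows "(\<Sum>v\<in>S. divg F tail head y v) = 0"
proof -
  have "(\<Sum>v\<in>S. divg F tail head y v) =
     (\<Sum>v\<in>S. \<Sum>e\<in>F. (if head e = v then y e else 0) - (if tail e = v then y e else 0))"
    using assms by (simp add: divg_alt)
  also have "\<dots> = (\<Sum>e\<in>F. \<Sum>v\<in>S. (if head e = v then y e else 0) - (if tail e = v then y e else 0))"
    by (rule sum.swap)
  also have "\<dots> = (\<Sum>e\<in>F. (if head e \<in> S then y e else 0) - (if tail e \<in> S then y e else 0))"
    using assms by (simp add: sum_subtractf sum.delta)
  also have "\<dots> = 0" using assms(3) by (intro sum.neutral) auto
  finally show ?thesis .
qed

definition forest :: "'e set \<Rightarrow> ('e \<Rightarrow> 'v) \<Rightarrow> ('e \<Rightarrow> 'v) \<Rightarrow> bool" where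
  "forest F tail head \<longleftrightarrow> (\<forall>e\<in>F. \<not> und_connected (F - {e}) tail head (tail e) (head e))"

lemma und_adj_mono: "F \<subseteq> G \<Longrightarrow> und_adj F tail head \<subseteq> und_adj G tail head"
  by (auto simp: und_adj_def)

lemma und_connected_mono: "und_connected F tail head a b \<Longrightarrow> F \<subseteq> G \<Longrightarrow> und_connected G tail head a b"
proof -
  assume a: "und_connected F tail head a b" and s: "F \<subseteq> G"
  have "(und_adj F tail head)\<^sup>* \<subseteq> (und_adj G tail head)\<^sup>*"
    by (rule rtrancl_mono[OF und_adj_mono[OF s]])
  then show ?thesis using a unfolding und_connected_def by (rule subsetD)
qed

lemma forest_mono: "forest F tail head \<Longrightarrow> G \<subseteq> F \<Longrightarrow> forest G tail head"
  unfolding forest_def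
proof
  fix e assume f: "\<forall>e\<in>F. \<not> und_connected (F - {e}) tail head (tail e) (head e)" and G: "G \<subseteq> F" "e \<in> G"
  show "\<not> und_connected (G - {e}) tail head (tail e) (head e)"
  proof
    assume "und_connected (G - {e}) tail head (tail e) (head e)"
    then have "und_connected (F - {e}) tail head (tail e) (head e)"
      by (rule und_connected_mono) (use G in blast)
    then show False using f G by blast
  qed
qed

lemma und_connected_sym: "und_connected F tail head a b \<Longrightarrow> und_connected F tail head b a"
proof -
  have c: "(und_adj F tail head)\<inverse> = und_adj F tail head" by (auto simp: und_adj_def)
  assume "und_connected F tail head a b"
  then have "(a, b) \<in> ((und_adj F tail head)\<inverse>)\<^sup>*" unfolding und_connected_def c .
  then show ?thesis unfolding und_connected_def by (rule rtrancl_converseD)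
qed

lemma und_connected_trans: "und_connected F tail head a b \<Longrightarrow> und_connected F tail head b c \<Longrightarrow> und_connected F tail head a c"
  unfolding und_connected_def by (rule rtrancl_trans)

lemma und_connected_edge: "e \<in> F \<Longrightarrow> und_connected F tail head (tail e) (head e)"
  unfolding und_connected_def und_adj_def by blast

lemma rtrancl_split:
  assumes "(s, t) \<in> (A \<union> {(a, b), (b, a)})\<^sup>*"
  shows "(s, t) \<in> A\<^sup>* \<or> ((s, a) \<in> A\<^sup>* \<and> (b, t) \<in> A\<^sup>*) \<or> ((s, b) \<in> A\<^sup>* \<and> (a, t) \<in> A\<^sup>*)"
  using assms
proof (induction t rule: rtrancl_induct)
  case base then show ?case by simp
next
  case (step w t)
  from step.hyps(2) have "(w,t)\<in>A \<or> (w=a \<and> t=b) \<or> (w=b \<and> t=a)" by blast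
  then show ?case
  proof (elim disjE conjE)
    assume "(w,t)\<in>A" then show ?case using step.IH by (meson rtrancl_into_rtrancl)
  next
    assume "w = a" "t = b" then show ?case using step.IH by (metis rtrancl.rtrancl_refl)
  next
    assume "w = b" "t = a" then show ?case using step.IH by (metis rtrancl.rtrancl_refl)
  qed
qed

lemma und_adj_insert:
  "und_adj (insert e F) tail head = und_adj F tail head \<union> {(tail e, head e), (head e, tail e)}"
  by (auto simp: und_adj_def)

lemma und_connected_insert:
  assumes "und_connected (insert e F) tail head s t"
  shows "und_connected F tail head s t \<or>
     (und_connected F tail head s (tail e) \<and> und_connected F tail head (head e) t) \<or>
     (und_connected F tail head s (head e) \<and> und_connected F tail head (tail e) t)"
  using rtrancl_split[of s t "und_adj F tail head" "tail e" "head e"] assms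
  unfolding und_connected_def und_adj_insert by simp

lemma sum_in_R:
  assumes "finite S" "\<forall>v\<in>S. f v \<in> R" "(0::real) \<in> R" "\<forall>a\<in>R. \<forall>b\<in>R. a + b \<in> R"
  shows "sum f S \<in> R"
  using assms by (induction S rule: finite_induct) auto

lemma forest_R:
  assumes "finite V" "finite F" "\<forall>e\<in>F. tail e \<in> V \<and> head e \<in> V" "forest F tail head"
    "(0::real) \<in> R" "\<forall>a\<in>R. \<forall>b\<in>R. a + b \<in> R" "\<forall>a\<in>R. \<forall>b\<in>R. a - b \<in> R"
    "\<forall>v\<in>V. divg F tail head y v \<in> R"
  shows "\<forall>e\<in>F. y e \<in> R"
  using assms(2-4,8)
proof (induction F rule: finite_induct)
  case empty then show ?case by simp
next
  case (insert e F0)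
  have nc: "\<not> und_connected F0 tail head (tail e) (head e)"
    using insert.prems(2) insert.hyps(2) unfolding forest_def by auto
  define S where "S = {w\<in>V. und_connected F0 tail head (tail e) w}"
  have fS: "finite S" using assms(1) by (simp add: S_def)
  have tS: "tail e \<in> S" using insert.prems(1) by (simp add: S_def und_connected_def)
  have hS: "head e \<notin> S" using nc by (simp add: S_def)
  have clo: "\<forall>e'\<in>F0. (tail e' \<in> S \<longleftrightarrow> head e' \<in> S)"
  proof
    fix e' assume e': "e' \<in> F0"
    have ed: "und_connected F0 tail head (tail e') (head e')" using e' und_connected_edge by metis
    have "tail e' \<in> S \<Longrightarrow> head e' \<in> S"
      using insert.prems(1) e' und_connected_trans[OF _ ed] unfolding S_def by auto
    moreover have "head e' \<in> S \<Longrightarrow> tail e' \<in> S"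
      using insert.prems(1) e' und_connected_trans[OF _ und_connected_sym[OF ed]] unfolding S_def by auto
    ultimately show "(tail e' \<in> S \<longleftrightarrow> head e' \<in> S)" by blast
  qed
  have z: "(\<Sum>v\<in>S. divg F0 tail head y v) = 0" using cut_zero[OF insert.hyps(1) fS clo] .
  have "(\<Sum>v\<in>S. divg (insert e F0) tail head y v) =
     (\<Sum>v\<in>S. divg F0 tail head y v) + (\<Sum>v\<in>S. (if head e = v then y e else 0)) - (\<Sum>v\<in>S. (if tail e = v then y e else 0))"
    using insert.hyps by (simp add: divg_insert sum.distrib sum_subtractf)
  also have "\<dots> = - y e" using z fS tS hS by (simp add: sum.delta)
  finally have ye: "y e = - (\<Sum>v\<in>S. divg (insert e F0) tail head y v)" by simp
  have "(\<Sum>v\<in>S. divg (insert e F0) tail head y v) \<in> R"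
    using sum_in_R[OF fS _ assms(5,6)] insert.prems(3) by (auto simp: S_def)
  then have yR: "y e \<in> R" unfolding ye using assms(5,7) by (metis diff_0)
  have "\<forall>v\<in>V. divg F0 tail head y v \<in> R"
  proof
    fix v assume v: "v \<in> V"
    have "divg F0 tail head y v = divg (insert e F0) tail head y v - (if head e = v then y e else 0) + (if tail e = v then y e else 0)"
      using insert.hyps by (simp add: divg_insert)
    moreover have A: "divg (insert e F0) tail head y v \<in> R" using insert.prems(3) v by blast
    moreover have I1: "(if head e = v then y e else 0) \<in> R" using yR assms(5) by simp
    moreover have I2: "(if tail e = v then y e else 0) \<in> R" using yR assms(5) by simp
    have d: "divg (insert e F0) tail head y v - (if head e = v then y e else 0) \<in> R"
      using assms(7) A I1 by blast
    have "divg (insert e F0) tail head y v - (if head e = v then y e else 0) + (if tail e = v then y e else 0) \<in> R"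
      using assms(6) d I2 by blast
    ultimately show "divg F0 tail head y v \<in> R" by simp
  qed
  note D = this
  have Fo: "forest F0 tail head" using insert.prems(2) forest_mono[of "insert e F0" tail head F0] by blast
  have En: "\<forall>e\<in>F0. tail e \<in> V \<and> head e \<in> V" using insert.prems(1) by simp
  have "\<forall>e\<in>F0. y e \<in> R" by (rule insert.IH[OF En Fo D])
  then show ?case using yR by simp
qed



lemma divg_cong: "\<forall>e\<in>F. y e = z e \<Longrightarrow> divg F tail head y v = divg F tail head z v"
  by (simp add: divg_def)

lemma divg_add: "divg F tail head (\<lambda>e. a e + b e) v = divg F tail head a v + divg F tail head b v"
  by (simp add: divg_def sum.distrib)

lemma und_connected_empty: "und_connected {} tail head s t \<Longrightarrow> s = t"
proof -
  have "und_adj {} tail head = {}" by (simp add: und_adj_def)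
  then show "und_connected {} tail head s t \<Longrightarrow> s = t" by (simp add: und_connected_def)
qed

lemma path_flow:
  assumes "finite F" "forest F tail head" "und_connected F tail head s t"
  shows "\<exists>y::'e\<Rightarrow>int. (\<forall>e. y e \<in> {-1,0,1}) \<and>
     (\<forall>e. y e \<noteq> 0 \<longrightarrow> e \<in> F \<and> und_connected F tail head s (tail e)) \<and>
     (\<forall>v. divg F tail head y v = (if v = t then 1 else 0) - (if v = s then 1 else 0))"
  using assms
proof (induction F arbitrary: s t rule: finite_induct)
  case empty
  then have "s = t" using und_connected_empty by metis
  then show ?case by (intro exI[of _ "\<lambda>_. 0"]) (simp add: divg_def)
next
  case (insert e F0)
  have sub: "F0 \<subseteq> insert e F0" by (rule subset_insertI)
  have nc0: "\<not> und_connected (insert e F0 - {e}) tail head (tail e) (head e)"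
    using insert.prems(1) unfolding forest_def by simp
  have nc: "\<not> und_connected F0 tail head (tail e) (head e)"
    using nc0 Diff_insert_absorb[OF insert.hyps(2)] by simp
  have fo: "forest F0 tail head" by (rule forest_mono[OF insert.prems(1) sub])
  have IH: "\<And>s t. und_connected F0 tail head s t \<Longrightarrow> \<exists>y::'e\<Rightarrow>int. (\<forall>e. y e \<in> {-1,0,1}) \<and>
     (\<forall>e. y e \<noteq> 0 \<longrightarrow> e \<in> F0 \<and> und_connected F0 tail head s (tail e)) \<and>
     (\<forall>v. divg F0 tail head y v = (if v = t then 1 else 0) - (if v = s then 1 else 0))"
    by (rule insert.IH[OF fo])
  have edge: "und_connected (insert e F0) tail head (tail e) (head e)" by (rule und_connected_edge) simp
  have div_ins: "\<And>(y::'e\<Rightarrow>int) v. divg (insert e F0) tail head y v = divg F0 tail head y v + (if head e = v then y e else 0) - (if tail e = v then y e else 0)"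
    using insert.hyps by (rule divg_insert)
  from und_connected_insert[OF insert.prems(2)]
  consider (A) "und_connected F0 tail head s t"
    | (B) "und_connected F0 tail head s (tail e)" "und_connected F0 tail head (head e) t"
    | (C) "und_connected F0 tail head s (head e)" "und_connected F0 tail head (tail e) t"
    by blast
  then show ?case
  proof cases
    case A
    then obtain y :: "'e \<Rightarrow> int" where y: "\<forall>e. y e \<in> {-1,0,1}"
      "\<forall>e. y e \<noteq> 0 \<longrightarrow> e \<in> F0 \<and> und_connected F0 tail head s (tail e)"
      "\<forall>v. divg F0 tail head y v = (if v = t then 1 else 0) - (if v = s then 1 else 0)"
      using IH by blast
    have ye: "y e = 0" using y(2) insert.hyps(2) by blast
    show ?thesis
    proof (rule exI[of _ y], intro conjI allI)
      fix e' show "y e' \<in> {-1,0,1}" by (rule spec[OF y(1)])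
    next
      fix e' show "y e' \<noteq> 0 \<longrightarrow> e' \<in> insert e F0 \<and> und_connected (insert e F0) tail head s (tail e')"
      proof
      assume "y e' \<noteq> 0"
      then have h: "e' \<in> F0" "und_connected F0 tail head s (tail e')" using y(2) by auto
      show "e' \<in> insert e F0 \<and> und_connected (insert e F0) tail head s (tail e')"
        using h(1) und_connected_mono[OF h(2) sub] by simp
      qed
    next
      fix v show "divg (insert e F0) tail head y v = (if v = t then 1 else 0) - (if v = s then 1 else 0)"
        using div_ins[of y v] ye y(3) by simp
    qed
  next
    case B
    obtain y1 :: "'e \<Rightarrow> int" where y1: "\<forall>e. y1 e \<in> {-1,0,1}"
      "\<forall>e. y1 e \<noteq> 0 \<longrightarrow> e \<in> F0 \<and> und_connected F0 tail head s (tail e)"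
      "\<forall>v. divg F0 tail head y1 v = (if v = tail e then 1 else 0) - (if v = s then 1 else 0)"
      using IH[OF B(1)] by blast
    obtain y2 :: "'e \<Rightarrow> int" where y2: "\<forall>e. y2 e \<in> {-1,0,1}"
      "\<forall>e'. y2 e' \<noteq> 0 \<longrightarrow> e' \<in> F0 \<and> und_connected F0 tail head (head e) (tail e')"
      "\<forall>v. divg F0 tail head y2 v = (if v = t then 1 else 0) - (if v = head e then 1 else 0)"
      using IH[OF B(2)] by blast
    have disj: "y1 e' = 0 \<or> y2 e' = 0" for e'
    proof (rule ccontr)
      assume "\<not> (y1 e' = 0 \<or> y2 e' = 0)"
      then have a: "und_connected F0 tail head s (tail e')" "und_connected F0 tail head (head e) (tail e')"
        using y1(2) y2(2) by auto
      have q: "und_connected F0 tail head (tail e) (tail e')"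
        using und_connected_trans[OF und_connected_sym[OF B(1)] a(1)] .
      have "und_connected F0 tail head (tail e) (head e)"
        by (rule und_connected_trans[OF q und_connected_sym[OF a(2)]])
      then show False using nc by blast
    qed
    have y1e: "y1 e = 0" and y2e: "y2 e = 0" using y1(2) y2(2) insert.hyps(2) by blast+
    define y where "y = (\<lambda>e'. y1 e' + y2 e' + (if e' = e then 1 else 0))"
    show ?thesis
    proof (rule exI[of _ y], intro conjI allI)
      fix e' show "y e' \<in> {-1,0,1}"
        using y1(1) y2(1) disj[of e'] y1e y2e unfolding y_def
        by (cases "e' = e") auto
    next
      fix e' show "y e' \<noteq> 0 \<longrightarrow> e' \<in> insert e F0 \<and> und_connected (insert e F0) tail head s (tail e')"
      proof
      assume nz: "y e' \<noteq> 0"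
      show "e' \<in> insert e F0 \<and> und_connected (insert e F0) tail head s (tail e')"
      proof (cases "e' = e")
        case True then show ?thesis using und_connected_mono[OF B(1) sub] by simp
      next
        case False
        then have "y1 e' \<noteq> 0 \<or> y2 e' \<noteq> 0" using nz unfolding y_def by auto
        then show ?thesis
        proof
          assume "y1 e' \<noteq> 0"
          then have h: "e' \<in> F0" "und_connected F0 tail head s (tail e')" using y1(2) by auto
          show ?thesis using h(1) und_connected_mono[OF h(2) sub] by simp
        next
          assume "y2 e' \<noteq> 0"
          then have h: "e' \<in> F0" "und_connected F0 tail head (head e) (tail e')" using y2(2) by auto
          have "und_connected (insert e F0) tail head s (head e)"
            using und_connected_trans[OF und_connected_mono[OF B(1) sub] edge] .
          then show ?thesis using h(1) und_connected_trans[OF _ und_connected_mono[OF h(2) sub]] by simp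
        qed
      qed
      qed
    next
      fix v
      have "divg F0 tail head y v = divg F0 tail head (\<lambda>e'. y1 e' + y2 e') v"
        using insert.hyps(2) by (intro divg_cong) (auto simp: y_def)
      also have "\<dots> = divg F0 tail head y1 v + divg F0 tail head y2 v" by (rule divg_add)
      finally have d: "divg F0 tail head y v = divg F0 tail head y1 v + divg F0 tail head y2 v" .
      have ye: "y e = 1" using y1e y2e by (simp add: y_def)
      show "divg (insert e F0) tail head y v = (if v = t then 1 else 0) - (if v = s then 1 else 0)"
        using div_ins[of y v] ye d y1(3) y2(3) by auto
    qed
  next
    case C
    obtain y1 :: "'e \<Rightarrow> int" where y1: "\<forall>e. y1 e \<in> {-1,0,1}"
      "\<forall>e. y1 e \<noteq> 0 \<longrightarrow> e \<in> F0 \<and> und_connected F0 tail head s (tail e)"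
      "\<forall>v. divg F0 tail head y1 v = (if v = head e then 1 else 0) - (if v = s then 1 else 0)"
      using IH[OF C(1)] by blast
    obtain y2 :: "'e \<Rightarrow> int" where y2: "\<forall>e. y2 e \<in> {-1,0,1}"
      "\<forall>e'. y2 e' \<noteq> 0 \<longrightarrow> e' \<in> F0 \<and> und_connected F0 tail head (tail e) (tail e')"
      "\<forall>v. divg F0 tail head y2 v = (if v = t then 1 else 0) - (if v = tail e then 1 else 0)"
      using IH[OF C(2)] by blast
    have disj: "y1 e' = 0 \<or> y2 e' = 0" for e'
    proof (rule ccontr)
      assume "\<not> (y1 e' = 0 \<or> y2 e' = 0)"
      then have a: "und_connected F0 tail head s (tail e')" "und_connected F0 tail head (tail e) (tail e')"
        using y1(2) y2(2) by auto
      have q: "und_connected F0 tail head (head e) (tail e')"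
        using und_connected_trans[OF und_connected_sym[OF C(1)] a(1)] .
      have "und_connected F0 tail head (tail e) (head e)"
        by (rule und_connected_trans[OF a(2) und_connected_sym[OF q]])
      then show False using nc by blast
    qed
    have y1e: "y1 e = 0" and y2e: "y2 e = 0" using y1(2) y2(2) insert.hyps(2) by blast+
    define y where "y = (\<lambda>e'. y1 e' + y2 e' - (if e' = e then 1 else 0))"
    show ?thesis
    proof (rule exI[of _ y], intro conjI allI)
      fix e' show "y e' \<in> {-1,0,1}"
        using y1(1) y2(1) disj[of e'] y1e y2e unfolding y_def
        by (cases "e' = e") auto
    next
      fix e' show "y e' \<noteq> 0 \<longrightarrow> e' \<in> insert e F0 \<and> und_connected (insert e F0) tail head s (tail e')"
      proof
      assume nz: "y e' \<noteq> 0"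
      have se: "und_connected (insert e F0) tail head s (tail e)"
        using und_connected_trans[OF und_connected_mono[OF C(1) sub] und_connected_sym[OF edge]] .
      show "e' \<in> insert e F0 \<and> und_connected (insert e F0) tail head s (tail e')"
      proof (cases "e' = e")
        case True then show ?thesis using se by simp
      next
        case False
        then have "y1 e' \<noteq> 0 \<or> y2 e' \<noteq> 0" using nz unfolding y_def by auto
        then show ?thesis
        proof
          assume "y1 e' \<noteq> 0"
          then have h: "e' \<in> F0" "und_connected F0 tail head s (tail e')" using y1(2) by auto
          show ?thesis using h(1) und_connected_mono[OF h(2) sub] by simp
        next
          assume "y2 e' \<noteq> 0"
          then have h: "e' \<in> F0" "und_connected F0 tail head (tail e) (tail e')" using y2(2) by auto
          show ?thesis using h(1) und_connected_trans[OF se und_connected_mono[OF h(2) sub]] by simp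
        qed
      qed
      qed
    next
      fix v
      have "divg F0 tail head y v = divg F0 tail head (\<lambda>e'. y1 e' + y2 e') v"
        using insert.hyps(2) by (intro divg_cong) (auto simp: y_def)
      also have "\<dots> = divg F0 tail head y1 v + divg F0 tail head y2 v" by (rule divg_add)
      finally have d: "divg F0 tail head y v = divg F0 tail head y1 v + divg F0 tail head y2 v" .
      have ye: "y e = -1" using y1e y2e by (simp add: y_def)
      show "divg (insert e F0) tail head y v = (if v = t then 1 else 0) - (if v = s then 1 else 0)"
        using div_ins[of y v] ye d y1(3) y2(3) by auto
    qed
  qed
qed



lemma divg_diff: "divg F tail head (\<lambda>e. a e - b e) v = divg F tail head a v - divg F tail head b v"
  by (simp add: divg_def sum_subtractf)

lemma fund_cycle_props:
  fixes V :: "'v set" and E :: "'e set" and tail head :: "'e \<Rightarrow> 'v" and T :: "'e set" and f :: 'e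
  assumes wf: "wf_digraph V E tail head" and st: "spanning_tree V E tail head T"
    and fE: "f \<in> E" and fT: "f \<notin> T"
  shows "fund_cycle V E tail head T f f = 1 \<and>
     (\<forall>e. fund_cycle V E tail head T f e \<noteq> 0 \<longrightarrow> e \<in> insert f T) \<and>
     conserves V E tail head (fund_cycle V E tail head T f)"
proof -
  define P where "P = (\<lambda>\<gamma>::'e\<Rightarrow>int. \<gamma> f = 1 \<and> (\<forall>e. \<gamma> e \<in> {-1, 0, 1}) \<and> (\<forall>e. \<gamma> e \<noteq> 0 \<longrightarrow> e \<in> insert f T) \<and>
     conserves V E tail head \<gamma>)"
  have fE': "finite E" and ends: "\<forall>e\<in>E. tail e \<in> V \<and> head e \<in> V" and fV: "finite V"
    using wf by (auto simp: wf_digraph_def)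
  have TE: "T \<subseteq> E" using st by (simp add: spanning_tree_def)
  have fT': "finite T" using finite_subset[OF TE fE'] .
  have fo: "forest T tail head" using st by (simp add: spanning_tree_def forest_def)
  have endsT: "\<forall>e\<in>T. tail e \<in> V \<and> head e \<in> V" using ends TE by blast
  have iE: "insert f T \<subseteq> E" using TE fE by blast
  have ex: "\<exists>\<gamma>. P \<gamma>"
  proof -
    have "head f \<in> V" "tail f \<in> V" using ends fE by auto
    then have "und_connected T tail head (head f) (tail f)" using st by (simp add: spanning_tree_def)
    from path_flow[OF fT' fo this] obtain y :: "'e \<Rightarrow> int" where y: "\<forall>e. y e \<in> {-1,0,1}"
      "\<forall>e. y e \<noteq> 0 \<longrightarrow> e \<in> T \<and> und_connected T tail head (head f) (tail e)"
      "\<forall>v. divg T tail head y v = (if v = tail f then 1 else 0) - (if v = head f then 1 else 0)"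
      by blast
    define g where "g = y(f := 1)"
    have g1: "g f = 1" by (simp add: g_def)
    have g2: "\<forall>e. g e \<in> {-1, 0, 1}" using y(1) by (simp add: g_def)
    have g3: "\<forall>e. g e \<noteq> 0 \<longrightarrow> e \<in> insert f T"
    proof (intro allI impI)
      fix e assume "g e \<noteq> 0"
      then show "e \<in> insert f T"
      proof (cases "e = f")
        case False then have "y e \<noteq> 0" using \<open>g e \<noteq> 0\<close> by (simp add: g_def)
        then show ?thesis using y(2) by blast
      qed simp
    qed
    have g4: "conserves V E tail head g" unfolding conserves_divg
    proof
      fix v assume "v \<in> V"
      have "divg E tail head g v = divg (insert f T) tail head g v"
        using g3 by (intro divg_support[OF fE' iE]) blast
      also have "\<dots> = divg T tail head g v + (if head f = v then g f else 0) - (if tail f = v then g f else 0)"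
        by (rule divg_insert[OF fT' fT])
      also have "divg T tail head g v = divg T tail head y v"
        using fT by (intro divg_cong) (auto simp: g_def)
      finally show "divg E tail head g v = 0" using y(3) g1 by auto
    qed
    show ?thesis using g1 g2 g3 g4 unfolding P_def by blast
  qed
  have uniq: "g1 = g2" if p1: "P g1" and p2: "P g2" for g1 g2
  proof -
    define d where "d = (\<lambda>e. real_of_int (g1 e - g2 e))"
    have dz: "\<forall>e\<in>E - T. d e = 0"
    proof
      fix e assume "e \<in> E - T"
      then have "e \<notin> insert f T \<or> e = f" by blast
      then show "d e = 0" using p1 p2 unfolding P_def d_def by (metis diff_self of_int_0)
    qed
    have "\<forall>v\<in>V. divg T tail head d v \<in> {0}"
    proof
      fix v assume v: "v \<in> V"
      have "divg T tail head d v = divg E tail head d v"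
        using divg_support[OF fE' TE dz, of tail head v] by simp
      also have "\<dots> = real_of_int (divg E tail head (\<lambda>e. g1 e - g2 e) v)"
        unfolding d_def by (rule divg_of_int)
      also have "\<dots> = 0" using p1 p2 v unfolding P_def conserves_divg divg_diff by simp
      finally show "divg T tail head d v \<in> {0}" by simp
    qed
    from forest_R[OF fV fT' endsT fo _ _ _ this]
    have "\<forall>e\<in>T. d e \<in> {0}" by simp
    then have "\<forall>e\<in>T. g1 e = g2 e" by (simp add: d_def)
    moreover have "\<forall>e. e \<notin> T \<longrightarrow> g1 e = g2 e"
    proof (intro allI impI)
      fix e assume "e \<notin> T"
      then have "e \<notin> insert f T \<or> e = f" by blast
      then show "g1 e = g2 e" using p1 p2 unfolding P_def by metis
    qed
    ultimately show ?thesis by blast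
  qed
  have "P (fund_cycle V E tail head T f)"
    unfolding fund_cycle_def P_def[symmetric]
    by (rule theI'[of P]) (use ex uniq in blast)
  then show ?thesis unfolding P_def by blast
qed



theorem corollary1:
  fixes V :: "'v set" and E :: "'e set" and tail head :: "'e \<Rightarrow> 'v"
    and u :: "'e \<Rightarrow> nat" and c :: "'e \<Rightarrow> int" and b :: "'e \<Rightarrow> nat" and B :: nat
    and L T U :: "'e set" and eb :: 'e and x :: "'e \<Rightarrow> real"
  assumes "wf_digraph V E tail head"
    and "basis_structure V E tail head b L T U eb"
    and "basic_solution V E tail head u b B L T U x"
    and "\<forall>e\<in>E. 0 \<le> x e \<and> x e \<le> real (u e)"
  shows "\<exists>xI xC :: 'e \<Rightarrow> real.
           (\<forall>e\<in>E. x e = xI e + xC e) \<and>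
           (\<forall>e\<in>E. xI e \<in> \<int>) \<and>
           (\<forall>e\<in>E. e \<notin> cycle_edges V E tail head T eb \<longrightarrow> xC e = 0)"
proof -
  have wf: "wf_digraph V E tail head" by fact
  have bs: "eb \<in> E" "L \<union> T \<union> U = E - {eb}" "L \<inter> T = {}" "L \<inter> U = {}" "T \<inter> U = {}"
    "spanning_tree V E tail head T"
    using assms(2) unfolding basis_structure_def by simp_all
  have bsol: "conserves V E tail head x" "\<forall>e\<in>L. x e = 0" "\<forall>e\<in>U. x e = real (u e)"
    using assms(3) unfolding basic_solution_def by simp_all
  have ebT: "eb \<notin> T" using bs(2) by blast
  define \<gamma> where "\<gamma> = fund_cycle V E tail head T eb"
  have gp: "\<gamma> eb = 1" "\<forall>e. \<gamma> e \<noteq> 0 \<longrightarrow> e \<in> insert eb T" "conserves V E tail head \<gamma>"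
    using fund_cycle_props[OF wf bs(6) bs(1) ebT] unfolding \<gamma>_def by auto
  have fE: "finite E" and ends: "\<forall>e\<in>E. tail e \<in> V \<and> head e \<in> V" and fV: "finite V"
    using wf by (auto simp: wf_digraph_def)
  have TE: "T \<subseteq> E" using bs(6) by (simp add: spanning_tree_def)
  have fT: "finite T" using finite_subset[OF TE fE] .
  have fo: "forest T tail head" using bs(6) by (simp add: spanning_tree_def forest_def)
  have endsT: "\<forall>e\<in>T. tail e \<in> V \<and> head e \<in> V" using ends TE by blast
  define g where "g = (\<lambda>e. real_of_int (\<gamma> e))"
  define xI where "xI = (\<lambda>e. x e - x eb * g e)"
  define xC where "xC = (\<lambda>e. x eb * g e)"
  have offT: "xI e \<in> \<int>" if "e \<in> E - T" for e
  proof -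
    have c: "e = eb \<or> e \<in> L \<or> e \<in> U" using that bs(2) by blast
    have g0: "e \<noteq> eb \<Longrightarrow> g e = 0" using gp(2) that unfolding g_def by auto
    from c show ?thesis
    proof (elim disjE)
      assume "e = eb" then show ?thesis using gp(1) by (simp add: xI_def g_def)
    next
      assume "e \<in> L" then have "e \<noteq> eb" using bs(2) by blast
      then show ?thesis using g0 bsol(2) \<open>e \<in> L\<close> by (simp add: xI_def)
    next
      assume "e \<in> U" then have "e \<noteq> eb" using bs(2) by blast
      then show ?thesis using g0 bsol(3) \<open>e \<in> U\<close> by (simp add: xI_def)
    qed
  qed
  have dv: "\<forall>v\<in>V. divg T tail head xI v \<in> \<int>"
  proof
    fix v assume v: "v \<in> V"
    have "divg E tail head xI v = divg E tail head x v - x eb * divg E tail head g v"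
      unfolding xI_def by (rule divg_lin)
    also have "divg E tail head g v = real_of_int (divg E tail head \<gamma> v)"
      unfolding g_def by (rule divg_of_int)
    also have "\<dots> = 0" using gp(3) v unfolding conserves_divg by simp
    also have "divg E tail head x v = 0" using bsol(1) v unfolding conserves_divg by simp
    finally have z: "divg E tail head xI v = 0" by simp
    have "divg (E - T) tail head xI v \<in> \<int>"
      unfolding divg_def using offT fE
      by (intro Ints_diff Ints_sum) auto
    moreover have "divg E tail head xI v = divg T tail head xI v + divg (E - T) tail head xI v"
      by (rule divg_split[OF fE TE])
    ultimately have "divg T tail head xI v = - divg (E - T) tail head xI v" using z by simp
    then show "divg T tail head xI v \<in> \<int>" using \<open>divg (E - T) tail head xI v \<in> \<int>\<close> by (simp add: Ints_minus)
  qed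
  have onT: "\<forall>e\<in>T. xI e \<in> \<int>"
    by (rule forest_R[OF fV fT endsT fo _ _ _ dv]) (auto intro: Ints_add Ints_diff)
  have A: "\<forall>e\<in>E. x e = xI e + xC e" by (simp add: xI_def xC_def)
  have B: "\<forall>e\<in>E. xI e \<in> \<int>" using onT offT by blast
  have C: "\<forall>e\<in>E. e \<notin> cycle_edges V E tail head T eb \<longrightarrow> xC e = 0"
    by (simp add: cycle_edges_def xC_def g_def \<gamma>_def)
  show ?thesis using A B C by blast
qed

end
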